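(* For each $T$ and each $z\in L_T$, $\mathbb{P}$-almost surely the infimum in the definition of $h_T(z)$ is attained for some finite sequence $y_0,\dots,y_n\in L_T$ with $y_0=z$, $y_n=0$.
   Context: $(\xi(z))_{z\in\mathbb{Z}^d}$ are i.i.d. with $\mathbb{P}(\xi(z)>x)=x^{-\alpha}$ for $x\ge1$, $\alpha>d$. $|\cdot|$ is the $\ell_1$-norm. $q=d/(\alpha-d)$, $a(T)=(T/\log T)^q$, $r(T)=(T/\log T)^{q+1}$, $L_T=\{z\in\mathbb{R}^d:r(T)z\in\mathbb{Z}^d\}$, $\xi_T(z)=\xi(r(T)z)/a(T)$. For $z\in L_T$, \[h_T(z)=\inf\Big\{\sum_{j=1}^n q\frac{|y_{j-1}-y_j|}{\xi_T(y_j)}: n\ge0,\ y_0,\dots,y_n\in L_T,\ y_0=z,\ y_n=0\Big\}.\] *)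

theory Defs
  imports "HOL-Probability.Probability"
begin

text \<open>Lattice Z^d is int^'d, R^d is real^'d, d = CARD('d).\<close>

definition l1norm :: "real^'d \<Rightarrow> real" where
  "l1norm x = (\<Sum>i\<in>UNIV. \<bar>x $ i\<bar>)"

definition qexp :: "real \<Rightarrow> 'd::finite itself \<Rightarrow> real" where
  "qexp \<alpha> _ = real CARD('d) / (\<alpha> - real CARD('d))"

definition aT :: "real \<Rightarrow> real \<Rightarrow> real" where
  "aT q T = (T / ln T) powr q"

definition rT :: "real \<Rightarrow> real \<Rightarrow> real" where
  "rT q T = (T / ln T) powr (q + 1)"

definition LT :: "real \<Rightarrow> (real^'d) set" where
  "LT r = {z. \<forall>i. r * z $ i \<in> \<int>}"

definition to_lattice :: "real \<Rightarrow> real^'d \<Rightarrow> int^'d" where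
  "to_lattice r z = (\<chi> i. round (r * z $ i))"

text \<open>xi_T(z) = xi(r(T) z) / a(T), for a fixed realisation xi of the field.\<close>
definition xiT :: "(int^'d \<Rightarrow> real) \<Rightarrow> real \<Rightarrow> real \<Rightarrow> real^'d \<Rightarrow> real" where
  "xiT xi a r z = xi (to_lattice r z) / a"

definition admissible_path :: "real \<Rightarrow> real^'d \<Rightarrow> nat \<Rightarrow> (nat \<Rightarrow> real^'d) \<Rightarrow> bool" where
  "admissible_path r z n y \<longleftrightarrow> (\<forall>j\<le>n. y j \<in> LT r) \<and> y 0 = z \<and> y n = 0"

definition path_cost :: "real \<Rightarrow> (real^'d \<Rightarrow> real) \<Rightarrow> nat \<Rightarrow> (nat \<Rightarrow> real^'d) \<Rightarrow> real" where
  "path_cost q xt n y = (\<Sum>j=1..n. q * l1norm (y (j - 1) - y j) / xt (y j))"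

definition hT :: "real \<Rightarrow> real \<Rightarrow> (int^'d \<Rightarrow> real) \<Rightarrow> real^'d \<Rightarrow> real" where
  "hT \<alpha> T xi z =
    (let q = qexp \<alpha> TYPE('d); a = aT q T; r = rT q T in
     Inf {path_cost q (xiT xi a r) n y | n y. admissible_path r z n y})"

end

theory Submission
  imports Defs "HOL-Real_Asymp.Real_Asymp"
begin


lemma l1norm_nonneg: "0 \<le> l1norm x"
  unfolding l1norm_def by (simp add: sum_nonneg)

lemma l1norm_tri: "l1norm (a - c) \<le> l1norm (a - b) + l1norm (b - c)"
proof -
  have "l1norm (a - c) = (\<Sum>i\<in>UNIV. \<bar>(a - b) $ i + (b - c) $ i\<bar>)"
    unfolding l1norm_def by (intro sum.cong) auto
  also have "\<dots> \<le> (\<Sum>i\<in>UNIV. \<bar>(a - b) $ i\<bar> + \<bar>(b - c) $ i\<bar>)"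
    by (intro sum_mono abs_triangle_ineq)
  finally show ?thesis unfolding l1norm_def by (simp add: sum.distrib)
qed

lemma l1norm_minus: "l1norm (a - b) = l1norm (b - a)"
  unfolding l1norm_def by (intro sum.cong) auto

lemma telescope:
  assumes "k \<le> n"
  shows "l1norm (y k - y n) \<le> (\<Sum>j=Suc k..n. l1norm (y (j - 1) - y j))"
  using assms
proof (induction n)
  case 0 then show ?case by (simp add: l1norm_def)
next
  case (Suc n)
  show ?case
  proof (cases "k = Suc n")
    case True then show ?thesis by (simp add: l1norm_def)
  next
    case False
    then have kn: "k \<le> n" using Suc.prems by simp
    have "l1norm (y k - y (Suc n)) \<le> l1norm (y k - y n) + l1norm (y n - y (Suc n))"
      by (rule l1norm_tri)
    also have "\<dots> \<le> (\<Sum>j=Suc k..n. l1norm (y (j - 1) - y j)) + l1norm (y n - y (Suc n))"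
      using Suc.IH[OF kn] by simp
    also have "\<dots> = (\<Sum>j=Suc k..Suc n. l1norm (y (j - 1) - y j))"
      using kn by (simp add: sum.atLeast_Suc_atMost_Suc_shift sum.nat_ivl_Suc')
    finally show ?thesis .
  qed
qed

lemma sum_split_nat:
  fixes f :: "nat \<Rightarrow> real"
  assumes "a \<le> b" "b \<le> c"
  shows "(\<Sum>j=Suc a..c. f j) = (\<Sum>j=Suc a..b. f j) + (\<Sum>j=Suc b..c. f j)"
  using assms(2)
proof (induction c)
  case 0 then show ?case using assms by simp
next
  case (Suc c)
  show ?case
  proof (cases "b = Suc c")
    case True then show ?thesis by simp
  next
    case False
    then have "b \<le> c" using Suc.prems by simp
    then show ?thesis using Suc.IH assms(1) by (simp add: sum.nat_ivl_Suc')
  qed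
qed

lemma reduce_path:
  assumes "admissible_path r z n y" "\<And>w. w \<in> LT r \<Longrightarrow> 0 \<le> xt w" "0 \<le> q"
  shows "\<exists>n' y'. admissible_path r z n' y' \<and> inj_on y' {0..n'} \<and>
           path_cost q xt n' y' \<le> path_cost q xt n y"
  using assms(1)
proof (induction n arbitrary: y rule: less_induct)
  case (less n)
  show ?case
  proof (cases "inj_on y {0..n}")
    case True then show ?thesis using less.prems by blast
  next
    case False
    then obtain a b where ab: "a \<le> n" "b \<le> n" "a \<noteq> b" "y a = y b"
      unfolding inj_on_def by auto
    obtain i k where ik: "i < k" "k \<le> n" "y i = y k"
      using ab by (metis linorder_neqE_nat)
    define y' where "y' = (\<lambda>j. if j \<le> i then y j else y (j + (k - i)))"
    define n' where "n' = n - (k - i)"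
    have n'lt: "n' < n" using ik by (simp add: n'_def)
    have adm: "(\<forall>j\<le>n. y j \<in> LT r)" "y 0 = z" "y n = 0"
      using less.prems unfolding admissible_path_def by auto
    have adm': "admissible_path r z n' y'"
      unfolding admissible_path_def
    proof (intro conjI allI impI)
      fix j assume "j \<le> n'"
      then show "y' j \<in> LT r" using adm(1) ik by (auto simp: y'_def n'_def)
    next
      show "y' 0 = z" using adm by (simp add: y'_def)
    next
      show "y' n' = 0"
      proof (cases "n' \<le> i")
        case True
        then have "n = k" using ik by (simp add: n'_def)
        then show ?thesis using True ik adm \<open>n' \<le> i\<close> by (simp add: y'_def n'_def)
      next
        case False
        then have "n' + (k - i) = n" using ik by (simp add: n'_def)
        then show ?thesis using False adm by (simp add: y'_def)
      qed
    qed
    define t where "t = (\<lambda>j. q * l1norm (y (j - 1) - y j) / xt (y j))"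
    have tnn: "0 \<le> t j" if "j \<le> n" for j
      using adm(1) that assms(2,3) by (auto simp: t_def intro!: divide_nonneg_nonneg mult_nonneg_nonneg l1norm_nonneg)
    have pc: "path_cost q xt n y = (\<Sum>j=Suc 0..n. t j)"
      unfolding path_cost_def t_def by simp
    have "path_cost q xt n y = (\<Sum>j=Suc 0..i. t j) + (\<Sum>j=Suc i..k. t j) + (\<Sum>j=Suc k..n. t j)"
      using pc sum_split_nat[of 0 i n t] sum_split_nat[of i k n t] ik by simp
    moreover have "(\<Sum>j=Suc i..k. t j) \<ge> 0"
      using tnn ik by (intro sum_nonneg) auto
    ultimately have le1: "(\<Sum>j=Suc 0..i. t j) + (\<Sum>j=Suc k..n. t j) \<le> path_cost q xt n y"
      by simp
    have i_le: "i \<le> n'" using ik by (simp add: n'_def)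
    have "path_cost q xt n' y' = (\<Sum>j=Suc 0..n'. q * l1norm (y' (j - 1) - y' j) / xt (y' j))"
      unfolding path_cost_def by simp
    also have "\<dots> = (\<Sum>j=Suc 0..i. q * l1norm (y' (j - 1) - y' j) / xt (y' j))
        + (\<Sum>j=Suc i..n'. q * l1norm (y' (j - 1) - y' j) / xt (y' j))"
      using sum_split_nat[of 0 i n'] i_le by simp
    also have "(\<Sum>j=Suc 0..i. q * l1norm (y' (j - 1) - y' j) / xt (y' j)) = (\<Sum>j=Suc 0..i. t j)"
      by (intro sum.cong) (auto simp: y'_def t_def)
    also have "(\<Sum>j=Suc i..n'. q * l1norm (y' (j - 1) - y' j) / xt (y' j))
        = (\<Sum>j=Suc i..n'. t (j + (k - i)))"
    proof (intro sum.cong refl)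
      fix j assume j: "j \<in> {Suc i..n'}"
      have "y' (j - 1) = y (j + (k - i) - 1)"
      proof (cases "j = Suc i")
        case True then show ?thesis using ik by (simp add: y'_def)
      next
        case False
        then have "\<not> j - 1 \<le> i" "j - 1 + (k - i) = j + (k - i) - 1" using j ik by auto
        then show ?thesis by (simp add: y'_def)
      qed
      moreover have "y' j = y (j + (k - i))" using j by (simp add: y'_def)
      ultimately show "q * l1norm (y' (j - 1) - y' j) / xt (y' j) = t (j + (k - i))"
        by (simp add: t_def)
    qed
    also have "\<dots> = (\<Sum>j=Suc i + (k - i)..n' + (k - i). t j)"
      by (rule sum.shift_bounds_cl_nat_ivl[symmetric])
    also have "\<dots> = (\<Sum>j=Suc k..n. t j)"
      using ik by (simp add: n'_def)
    finally have "path_cost q xt n' y' \<le> path_cost q xt n y" using le1 by simp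
    then show ?thesis using less.IH[OF n'lt adm'] by (meson order_trans)
  qed
qed

lemma path_bounded:
  assumes adm: "admissible_path r z n y" and q: "0 < q"
    and pos: "\<And>w. w \<in> LT r \<Longrightarrow> 0 < xt w"
    and gb: "\<And>w \<rho>. w \<in> LT r \<Longrightarrow> l1norm w \<le> \<rho> \<Longrightarrow> xt w \<le> g \<rho>"
    and cost: "path_cost q xt n y \<le> B"
    and rho0: "\<And>\<rho>. \<rho> \<ge> \<rho>0 \<Longrightarrow> B < q * \<rho> / g \<rho>"
    and jn: "j \<le> n"
  shows "l1norm (y j) < \<rho>0"
proof (rule ccontr)
  assume contra: "\<not> l1norm (y j) < \<rho>0"
  have admd: "(\<forall>j\<le>n. y j \<in> LT r)" "y 0 = z" "y n = 0"
    using adm unfolding admissible_path_def by auto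
  define f where "f = (\<lambda>j. l1norm (y j))"
  define mx where "mx = Max (f ` {0..n})"
  have "mx \<in> f ` {0..n}" unfolding mx_def by (intro Max_in) auto
  then obtain k where k: "k \<le> n" "f k = mx" by auto
  have kmax: "f j' \<le> f k" if "j' \<le> n" for j'
    proof -
    have "f j' \<le> Max (f ` {0..n})" using that by (intro Max_ge) auto
    then show ?thesis using k unfolding mx_def by simp
  qed
  define \<rho> where "\<rho> = f k"
  have "\<rho> \<ge> \<rho>0" using kmax[OF jn] contra by (simp add: \<rho>_def f_def)
  then have B: "B < q * \<rho> / g \<rho>" by (rule rho0)
  have gpos: "0 < g \<rho>"
    using pos[of "y k"] gb[of "y k" \<rho>] admd k by (force simp: \<rho>_def f_def)
  define t where "t = (\<lambda>j. q * l1norm (y (j - 1) - y j) / xt (y j))"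
  have tnn: "0 \<le> t j" if "j \<le> n" for j
  proof -
    have "0 < xt (y j)" using admd(1) that pos by auto
    then show ?thesis using q by (auto simp: t_def intro!: divide_nonneg_nonneg mult_nonneg_nonneg l1norm_nonneg)
  qed
  have pc: "path_cost q xt n y = (\<Sum>j=Suc 0..n. t j)"
    unfolding path_cost_def t_def by simp
  also have "\<dots> = (\<Sum>j=Suc 0..k. t j) + (\<Sum>j=Suc k..n. t j)"
    using sum_split_nat[of 0 k n t] k by simp
  also have "\<dots> \<ge> (\<Sum>j=Suc k..n. t j)"
  proof -
    have "0 \<le> (\<Sum>j=Suc 0..k. t j)" using tnn k by (intro sum_nonneg) auto
    then show ?thesis by simp
  qed
  finally have c1: "(\<Sum>j=Suc k..n. t j) \<le> path_cost q xt n y" .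
  have "(\<Sum>j=Suc k..n. q / g \<rho> * l1norm (y (j - 1) - y j)) \<le> (\<Sum>j=Suc k..n. t j)"
  proof (intro sum_mono)
    fix j assume j: "j \<in> {Suc k..n}"
    have yj: "y j \<in> LT r" using admd j by auto
    have "xt (y j) \<le> g \<rho>" using gb[OF yj] kmax[of j] j by (simp add: \<rho>_def f_def)
    moreover have "0 < xt (y j)" using pos[OF yj] .
    ultimately have "q * l1norm (y (j - 1) - y j) / g \<rho> \<le> q * l1norm (y (j - 1) - y j) / xt (y j)"
      using q by (intro divide_left_mono mult_nonneg_nonneg l1norm_nonneg) auto
    then show "q / g \<rho> * l1norm (y (j - 1) - y j) \<le> t j" by (simp add: t_def)
  qed
  moreover have "(\<Sum>j=Suc k..n. q / g \<rho> * l1norm (y (j - 1) - y j)) = q / g \<rho> * (\<Sum>j=Suc k..n. l1norm (y (j - 1) - y j))"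
    by (simp add: sum_distrib_left)
  moreover have "q / g \<rho> * \<rho> \<le> q / g \<rho> * (\<Sum>j=Suc k..n. l1norm (y (j - 1) - y j))"
  proof (rule mult_left_mono)
    show "\<rho> \<le> (\<Sum>j=Suc k..n. l1norm (y (j - 1) - y j))"
      using telescope[OF k(1), of y] admd by (simp add: \<rho>_def f_def)
    show "0 \<le> q / g \<rho>" using q gpos by simp
  qed
  ultimately have "q * \<rho> / g \<rho> \<le> path_cost q xt n y" using c1 by simp
  then show False using B cost by simp
qed

lemma box_sub:
  "{x::int^'d. \<forall>i. \<bar>x$i\<bar> \<le> K} \<subseteq> vec_lambda ` (PiE UNIV (\<lambda>_. {-K..K}))"
proof
  fix x :: "int^'d" assume "x \<in> {x. \<forall>i. \<bar>x$i\<bar> \<le> K}"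
  then have "(\<lambda>i. x$i) \<in> PiE UNIV (\<lambda>_. {-K..K})" by (auto simp: PiE_iff abs_le_iff minus_le_iff)
  moreover have "x = vec_lambda (\<lambda>i. x$i)" by simp
  ultimately show "x \<in> vec_lambda ` (PiE UNIV (\<lambda>_. {-K..K}))" by blast
qed

lemma vl_finite: "finite (vec_lambda ` (PiE (UNIV::'d::finite set) (\<lambda>_. {-K..K::int})))"
proof -
  have "finite (PiE (UNIV::'d set) (\<lambda>_. {-K..K}))" by (rule finite_PiE) auto
  then show ?thesis by (rule finite_imageI)
qed

lemma box_finite: "finite {x::int^'d. \<forall>i. \<bar>x$i\<bar> \<le> K}"
  proof (rule finite_subset[OF box_sub])
  have "finite (PiE (UNIV::'d set) (\<lambda>_. {-K..K}))" by (rule finite_PiE) auto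
  then show "finite (vec_lambda ` (PiE (UNIV::'d set) (\<lambda>_. {-K..K})))" by (rule finite_imageI)
qed

lemma box_card: "card {x::int^'d. \<forall>i. \<bar>x$i\<bar> \<le> K} \<le> nat (2*K+1) ^ CARD('d)"
proof -
  have "card {x::int^'d. \<forall>i. \<bar>x$i\<bar> \<le> K} \<le> card (vec_lambda ` (PiE (UNIV::'d set) (\<lambda>_. {-K..K})))"
    by (rule card_mono[OF vl_finite box_sub])
  also have "\<dots> \<le> card (PiE (UNIV::'d set) (\<lambda>_. {-K..K}))" by (rule card_image_le) (auto intro: finite_PiE)
  also have "\<dots> = nat (2*K+1) ^ CARD('d)" by (simp add: card_PiE)
  finally show ?thesis .
qed

lemma LT_int: assumes "w \<in> LT r" shows "r * w $ i = real_of_int (round (r * w $ i))"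
proof -
  have "r * w $ i \<in> \<int>" using assms unfolding LT_def by auto
  then obtain k where "r * w $ i = real_of_int k" by (auto elim!: Ints_cases)
  then show ?thesis by simp
qed

lemma l1norm_comp: "\<bar>w $ i\<bar> \<le> l1norm w"
  unfolding l1norm_def by (rule member_le_sum) auto

lemma F_finite:
  assumes "r > 0"
  shows "finite {w :: real^'d. w \<in> LT r \<and> l1norm w \<le> \<rho>0}"
proof -
  define K where "K = \<lceil>r * \<rho>0\<rceil>"
  have "{w :: real^'d. w \<in> LT r \<and> l1norm w \<le> \<rho>0} \<subseteq> (\<lambda>x::int^'d. \<chi> i. real_of_int (x$i) / r) ` {x. \<forall>i. \<bar>x$i\<bar> \<le> K}"
  proof
    fix w :: "real^'d" assume w: "w \<in> {w :: real^'d. w \<in> LT r \<and> l1norm w \<le> \<rho>0}"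
    define x where "x = ((\<chi> i. round (r * w $ i)) :: int^'d)"
    have "\<bar>x $ i\<bar> \<le> K" for i
    proof -
      have "\<bar>real_of_int (x$i)\<bar> = \<bar>r * w $ i\<bar>" using LT_int[of w r i] w by (simp add: x_def)
      also have "\<dots> = r * \<bar>w $ i\<bar>" using assms by (simp add: abs_mult)
      also have "\<dots> \<le> r * \<rho>0" using l1norm_comp[of w i] w assms by (intro mult_left_mono) auto
      also have "\<dots> \<le> real_of_int K" unfolding K_def by simp
      finally show ?thesis by linarith
    qed
    moreover have "w = (\<chi> i. real_of_int (x$i) / r)"
    proof (subst vec_eq_iff, intro allI)
      fix i show "w $ i = (\<chi> i. real_of_int (x$i) / r) $ i"
        using LT_int[of w r i] w assms by (simp add: x_def field_simps)
    qed
    ultimately show "w \<in> (\<lambda>x::int^'d. \<chi> i. real_of_int (x$i) / r) ` {x. \<forall>i. \<bar>x$i\<bar> \<le> K}" by blast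
  qed
  then show ?thesis by (rule finite_subset) (intro finite_imageI box_finite)
qed

lemma attain:
  fixes xt :: "real^'d \<Rightarrow> real" and z :: "real^'d"
  assumes r: "r > 0" and q: "q > 0" and z: "z \<in> LT r"
    and pos: "\<And>w. w \<in> LT r \<Longrightarrow> 0 < xt w"
    and gb: "\<And>w \<rho>. w \<in> LT r \<Longrightarrow> l1norm w \<le> \<rho> \<Longrightarrow> xt w \<le> g \<rho>"
    and lim: "\<And>B. \<exists>\<rho>0. \<forall>\<rho>\<ge>\<rho>0. B < q * \<rho> / g \<rho>"
  shows "\<exists>n y. admissible_path r z n y \<and>
     path_cost q xt n y = Inf {path_cost q xt n y | n y. admissible_path r z n y}"
proof -
  define P where "P = {path_cost q xt n y | n y. admissible_path r z n y}"
  have nn: "\<And>w. w \<in> LT r \<Longrightarrow> 0 \<le> xt w" using pos less_imp_le by blast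
  define y0 where "y0 = (\<lambda>j::nat. if j = 0 then z else 0)"
  have "0 \<in> LT r" unfolding LT_def by simp
  then have adm0: "admissible_path r z 1 y0"
    using z unfolding admissible_path_def y0_def by auto
  define B where "B = path_cost q xt 1 y0"
  obtain \<rho>0 where rho0: "\<And>\<rho>. \<rho> \<ge> \<rho>0 \<Longrightarrow> B < q * \<rho> / g \<rho>" using lim by blast
  define F where "F = {w :: real^'d. w \<in> LT r \<and> l1norm w \<le> \<rho>0}"
  have finF: "finite F" unfolding F_def by (rule F_finite[OF r])
  have inF: "\<forall>j\<le>n. y j \<in> F" if "admissible_path r z n y" "path_cost q xt n y \<le> B" for n y
  proof (intro allI impI)
    fix j assume j: "j \<le> n"
    have "l1norm (y j) < \<rho>0" by (rule path_bounded[OF that(1) q pos gb that(2) rho0 j])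
    moreover have "y j \<in> LT r" using that(1) j unfolding admissible_path_def by auto
    ultimately show "y j \<in> F" unfolding F_def by auto
  qed
  define Q where "Q = {path_cost q xt n y | n y. admissible_path r z n y \<and> inj_on y {0..n} \<and> (\<forall>j\<le>n. y j \<in> F)}"
  have finQ: "finite Q"
  proof -
    have "Q \<subseteq> (\<lambda>(n, f). path_cost q xt n f) ` (SIGMA n:{..card F}. PiE {0..n} (\<lambda>_. F))"
    proof
      fix c assume "c \<in> Q"
      then obtain n y where ny: "c = path_cost q xt n y" "admissible_path r z n y" "inj_on y {0..n}" "\<forall>j\<le>n. y j \<in> F"
        unfolding Q_def by blast
      have "card (y ` {0..n}) = Suc n" using ny(3) by (simp add: card_image)
      moreover have "card (y ` {0..n}) \<le> card F" using ny(4) finF by (intro card_mono) auto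
      ultimately have nle: "n \<le> card F" by simp
      have "restrict y {0..n} \<in> PiE {0..n} (\<lambda>_. F)" using ny(4) by auto
      moreover have "path_cost q xt n (restrict y {0..n}) = c"
        unfolding ny(1) path_cost_def by (intro sum.cong) auto
      ultimately show "c \<in> (\<lambda>(n, f). path_cost q xt n f) ` (SIGMA n:{..card F}. PiE {0..n} (\<lambda>_. F))"
        using nle by (intro image_eqI[of _ _ "(n, restrict y {0..n})"]) auto
    qed
    moreover have "finite (SIGMA n:{..card F}. PiE {0..n} (\<lambda>_. F))"
      using finF by (intro finite_SigmaI finite_PiE) auto
    ultimately show ?thesis by (meson finite_imageI finite_subset)
  qed
  obtain n1 y1 where ny1: "admissible_path r z n1 y1" "inj_on y1 {0..n1}" "path_cost q xt n1 y1 \<le> B"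
    using reduce_path[where xt=xt and q=q, OF adm0 nn less_imp_le[OF q]] unfolding B_def by auto
  have c1Q: "path_cost q xt n1 y1 \<in> Q"
    unfolding Q_def using ny1 inF[OF ny1(1) ny1(3)] by blast
  define m where "m = Min Q"
  have mQ: "m \<in> Q" unfolding m_def using finQ c1Q by (intro Min_in) auto
  have mle: "m \<le> c" if "c \<in> Q" for c unfolding m_def using finQ that by (intro Min_le)
  obtain n y where ny: "m = path_cost q xt n y" "admissible_path r z n y"
    using mQ unfolding Q_def by blast
  have "Inf P = m"
  proof (rule cInf_eq_minimum)
    show "m \<in> P" unfolding P_def using ny by blast
  next
    fix p assume "p \<in> P"
    then obtain n y where p: "p = path_cost q xt n y" "admissible_path r z n y" unfolding P_def by blast
    obtain n' y' where ny': "admissible_path r z n' y'" "inj_on y' {0..n'}" "path_cost q xt n' y' \<le> p"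
      using reduce_path[where xt=xt and q=q, OF p(2) nn less_imp_le[OF q]] p(1) by auto
    show "m \<le> p"
    proof (cases "path_cost q xt n' y' \<le> B")
      case True
      then have "path_cost q xt n' y' \<in> Q" unfolding Q_def using ny' inF[OF ny'(1) True] by blast
      then show ?thesis using mle ny'(3) by fastforce
    next
      case False
      then show ?thesis using mle[OF c1Q] ny1(3) ny'(3) by linarith
    qed
  qed
  then show ?thesis using ny unfolding P_def by metis
qed



lemma measure_UN_le_suminf:
  assumes fm: "finite_measure M" and A: "\<And>m::nat. A m \<in> sets M"
    and b: "\<And>m. measure M (A m) \<le> b m" and sb: "summable b"
  shows "measure M (\<Union>m. A m) \<le> suminf b"
proof -
  interpret finite_measure M by (rule fm)
  have bnn: "0 \<le> b m" for m using b[of m] measure_nonneg order_trans by blast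
  have "(\<Sum>m. emeasure M (A m)) \<le> (\<Sum>m. ennreal (b m))"
    using A b by (intro suminf_le summableI) (simp add: emeasure_eq_measure ennreal_leI)
  also have "\<dots> = ennreal (suminf b)" using bnn sb by (rule suminf_ennreal2)
  finally have fin: "(\<Sum>m. emeasure M (A m)) \<noteq> \<infinity>" by (auto simp: top_unique)
  have "measure M (\<Union>m. A m) \<le> (\<Sum>m. measure M (A m))"
    using A fin by (intro measure_subadditive_countably) auto
  also have "\<dots> \<le> suminf b"
    using b sb bnn by (intro suminf_le summable_comparison_test[OF _ sb]) auto
  finally show ?thesis .
qed

lemma le_zero_from_harmonic:
  fixes x K :: real
  assumes "\<And>n::nat. x \<le> K / real (Suc n)"
  shows "x \<le> 0"
proof (rule ccontr)
  assume "\<not> x \<le> 0"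
  then have x: "x > 0" by simp
  obtain n :: nat where n: "K / x < real n" using reals_Archimedean2 by blast
  then have "K < x * real (Suc n)" using x by (simp add: field_simps)
  then have "K / real (Suc n) < x" by (simp add: field_simps)
  then show False using assms[of n] by simp
qed

lemma growth_AE:
  fixes M :: "'w measure" and \<xi> :: "int^'d \<Rightarrow> 'w \<Rightarrow> real" and \<alpha> \<beta> :: real
  assumes ps: "prob_space M" and meas: "\<And>x. \<xi> x \<in> borel_measurable M"
    and tail: "\<And>x t. t \<ge> 1 \<Longrightarrow> measure M {\<omega>\<in>space M. \<xi> x \<omega> > t} = t powr (-\<alpha>)"
    and age: "\<alpha> \<ge> 1" and b: "0 < \<beta>" and ab: "\<alpha> * \<beta> > real CARD('d)"
  shows "AE \<omega> in M. \<exists>N>0. \<forall>m::nat. \<forall>x::int^'d. (\<forall>i. \<bar>x$i\<bar> \<le> 2^m) \<longrightarrow> \<xi> x \<omega> \<le> N * 2 powr (real m * \<beta>)"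
proof -
  interpret prob_space M by (rule ps)
  define D where "D = real CARD('d)"
  define c where "c = 2 powr (D - \<alpha> * \<beta>)"
  have c1: "c < 1" unfolding c_def D_def using ab by (intro powr_less_one) auto
  have c0: "0 < c" unfolding c_def by simp
  define bx where "bx m = {x::int^'d. \<forall>i. \<bar>x$i\<bar> \<le> 2^m}" for m :: nat
  define C where "C n m = (\<Union>x\<in>bx m. {\<omega>\<in>space M. real (Suc n) * 2 powr (real m * \<beta>) < \<xi> x \<omega>})" for n m :: nat
  have single: "{\<omega>\<in>space M. t < \<xi> x \<omega>} \<in> sets M" for x t
    using meas[of x] unfolding borel_measurable_iff_greater by blast
  have Csets: "C n m \<in> sets M" for n m
    unfolding C_def bx_def using box_finite single by blast
  define K0 where "K0 n = 3 ^ CARD('d) * real (Suc n) powr (-\<alpha>)" for n :: nat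
  have Cbound: "measure M (C n m) \<le> K0 n * c ^ m" for n m
  proof -
    define t where "t = real (Suc n) * 2 powr (real m * \<beta>)"
    have t1: "1 \<le> t" unfolding t_def
    proof -
      have "1 \<le> 2 powr (real m * \<beta>)" using b by (intro ge_one_powr_ge_zero) auto
      moreover have "1 \<le> real (Suc n)" by simp
      ultimately show "1 \<le> real (Suc n) * 2 powr (real m * \<beta>)" by (metis mult_mono' mult_1 zero_le_one)
    qed
    have "measure M (C n m) \<le> (\<Sum>x\<in>bx m. measure M {\<omega>\<in>space M. t < \<xi> x \<omega>})"
      unfolding C_def t_def bx_def by (intro measure_UNION_le box_finite single)
    also have "\<dots> = real (card (bx m)) * t powr (-\<alpha>)"
      using tail[OF t1] by simp
    also have "real (card (bx m)) \<le> (3 * 2 ^ m) ^ CARD('d)"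
    proof -
      have "card (bx m) \<le> nat (2 * 2 ^ m + 1) ^ CARD('d)" unfolding bx_def by (rule box_card)
      then have "real (card (bx m)) \<le> real (nat (2 * 2 ^ m + 1)) ^ CARD('d)"
        by (metis of_nat_le_iff of_nat_power)
      also have "real (nat (2 * 2 ^ m + 1)) = 2 * 2 ^ m + 1" by simp
      also have "(2 * 2 ^ m + 1 :: real) ^ CARD('d) \<le> (3 * 2 ^ m) ^ CARD('d)"
        by (intro power_mono) auto
      finally show ?thesis .
    qed
    then have "real (card (bx m)) * t powr (-\<alpha>) \<le> (3 * 2 ^ m) ^ CARD('d) * t powr (-\<alpha>)"
      by (intro mult_right_mono) auto
    also have "(3 * 2 ^ m) ^ CARD('d) * t powr (-\<alpha>) = K0 n * c ^ m"
    proof -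
      have e1: "(3 * 2 ^ m :: real) ^ CARD('d) = 3 ^ CARD('d) * 2 powr (real m * D)"
        by (simp add: power_mult_distrib D_def powr_realpow[symmetric] powr_powr[symmetric] mult.commute)
      have e2: "t powr (-\<alpha>) = real (Suc n) powr (-\<alpha>) * 2 powr (- (real m * \<beta> * \<alpha>))"
        unfolding t_def by (simp add: powr_mult powr_powr)
      have e3: "c ^ m = 2 powr (real m * (D - \<alpha> * \<beta>))"
        unfolding c_def by (simp add: powr_power)
      have e4: "2 powr (real m * D) * 2 powr (- (real m * \<beta> * \<alpha>)) = (2::real) powr (real m * (D - \<alpha> * \<beta>))"
        by (simp add: powr_add[symmetric] algebra_simps)
      show ?thesis unfolding e1 e2 e3 K0_def e4[symmetric] by (simp add: algebra_simps)
    qed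
    finally show ?thesis .
  qed
  have sumc: "summable (\<lambda>m. K0 n * c ^ m)" for n
    using c0 c1 by (intro summable_mult summable_geometric) auto
  have suminfc: "(\<Sum>m. K0 n * c ^ m) = K0 n / (1 - c)" for n
    using c0 c1 by (simp add: suminf_mult suminf_geometric summable_geometric divide_simps)
  define K where "K = 3 ^ CARD('d) / (1 - c)"
  have Dbound: "measure M (\<Union>m. C n m) \<le> K / real (Suc n)" for n
  proof -
    have "measure M (\<Union>m. C n m) \<le> K0 n / (1 - c)"
      using measure_UN_le_suminf[OF finite_measure_axioms Csets Cbound sumc] suminfc by simp
    also have "\<dots> \<le> K / real (Suc n)"
    proof -
      have "real (Suc n) powr (-\<alpha>) \<le> real (Suc n) powr (-1)" using age by (intro powr_mono) auto
      also have "\<dots> = 1 / real (Suc n)" by (simp add: powr_minus_divide)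
      finally have "real (Suc n) powr (-\<alpha>) \<le> 1 / real (Suc n)" .
      then have "K0 n \<le> 3 ^ CARD('d) / real (Suc n)" unfolding K0_def
        by (metis mult_left_mono times_divide_eq_right mult_1_right zero_le_numeral zero_le_power)
      then have "K0 n / (1 - c) \<le> (3 ^ CARD('d) / real (Suc n)) / (1 - c)"
        using c1 by (intro divide_right_mono) auto
      also have "\<dots> = K / real (Suc n)" unfolding K_def by (simp add: divide_divide_eq_left mult.commute)
      finally show ?thesis .
    qed
    finally show ?thesis .
  qed
  define Z where "Z = (\<Inter>n. \<Union>m. C n m)"
  have Zsets: "Z \<in> sets M" unfolding Z_def using Csets by blast
  have "measure M Z \<le> K / real (Suc n)" for n
  proof -
    have "measure M Z \<le> measure M (\<Union>m. C n m)"
      unfolding Z_def using Csets by (intro finite_measure_mono) blast+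
    then show ?thesis using Dbound[of n] by simp
  qed
  then have "measure M Z \<le> 0" by (rule le_zero_from_harmonic)
  then have "measure M Z = 0" using measure_nonneg[of M Z] by simp
  then have Znull: "Z \<in> null_sets M" using Zsets by (intro null_setsI) (simp_all add: emeasure_eq_measure)
  show ?thesis
  proof (rule AE_I'[OF Znull], safe)
    fix \<omega> assume \<omega>: "\<omega> \<in> space M"
      and nP: "\<not> (\<exists>N>0. \<forall>m::nat. \<forall>x::int^'d. (\<forall>i. \<bar>x$i\<bar> \<le> 2^m) \<longrightarrow> \<xi> x \<omega> \<le> N * 2 powr (real m * \<beta>))"
    show "\<omega> \<in> Z" unfolding Z_def
    proof
      fix n
      have "real (Suc n) > 0" by simp
      then obtain m x where "\<forall>i. \<bar>x$i\<bar> \<le> 2^m" "\<not> \<xi> x \<omega> \<le> real (Suc n) * 2 powr (real m * \<beta>)"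
        using nP by blast
      then show "\<omega> \<in> (\<Union>m. C n m)" unfolding C_def bx_def using \<omega> by (auto simp: not_le)
    qed
  qed
qed


lemma lim_test:
  fixes q a N r \<beta> :: real
  assumes "q > 0" "a > 0" "N > 0" "r > 0" "\<beta> < 1" "\<beta> > 0"
  shows "filterlim (\<lambda>\<rho>. q * \<rho> / (N * (2 * (1 + r * \<rho>)) powr \<beta> / a)) at_top at_top"
  using assms by real_asymp

lemma connect:
  fixes xi :: "int^'d \<Rightarrow> real" and z :: "real^'d"
  assumes r: "r > 0" and q: "q > 0" and a: "a > 0" and z: "z \<in> LT r"
    and b: "0 < \<beta>" "\<beta> < 1"
    and xpos: "\<And>x. 0 < xi x"
    and N: "N > 0"
    and bound: "\<And>m::nat. \<And>x. (\<forall>i. \<bar>x$i\<bar> \<le> 2^m) \<Longrightarrow> xi x \<le> N * 2 powr (real m * \<beta>)"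
  shows "\<exists>n y. admissible_path r z n y \<and>
     path_cost q (xiT xi a r) n y = Inf {path_cost q (xiT xi a r) n y | n y. admissible_path r z n y}"
proof (rule attain[OF r q z])
  show "0 < xiT xi a r w" for w using xpos a by (simp add: xiT_def)
next
  fix w :: "real^'d" and \<rho> :: real
  assume w: "w \<in> LT r" and wr: "l1norm w \<le> \<rho>"
  have rho: "0 \<le> \<rho>" using wr l1norm_nonneg order_trans by blast
  define m where "m = nat \<lceil>log 2 (1 + r * \<rho>)\<rceil>"
  have one: "1 \<le> 1 + r * \<rho>" using r rho by simp
  have lg: "0 \<le> log 2 (1 + r * \<rho>)" using one by (subst zero_le_log_cancel_iff) auto
  have pm: "2 powr real m = 2 ^ m" by (simp add: powr_realpow)
  have m1: "1 + r * \<rho> \<le> 2 powr real m"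
  proof -
    have "0 < 1 + r * \<rho>" using r rho by (smt (verit) mult_nonneg_nonneg)
    then have "1 + r * \<rho> = 2 powr (log 2 (1 + r * \<rho>))" by simp
    also have "\<dots> \<le> 2 powr real m" unfolding m_def using lg by (intro powr_mono) linarith+
    finally show ?thesis .
  qed
  have m2: "2 powr real m \<le> 2 * (1 + r * \<rho>)"
  proof -
    have "2 powr real m \<le> 2 powr (log 2 (1 + r * \<rho>) + 1)" unfolding m_def using lg by (intro powr_mono) linarith+
    also have "\<dots> = 2 * (1 + r * \<rho>)"
    proof -
      have "0 < 1 + r * \<rho>" using r rho by (smt (verit) mult_nonneg_nonneg)
      then show ?thesis by (simp add: powr_add)
    qed
    finally show ?thesis .
  qed
  have box: "\<forall>i. \<bar>to_lattice r w $ i\<bar> \<le> 2^m"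
  proof
    fix i
    have "\<bar>real_of_int (to_lattice r w $ i)\<bar> = \<bar>r * w $ i\<bar>"
      using LT_int[OF w, of i] by (simp add: to_lattice_def)
    also have "\<dots> = r * \<bar>w $ i\<bar>" using r by (simp add: abs_mult)
    also have "\<dots> \<le> r * \<rho>" using l1norm_comp[of w i] wr r by (intro mult_left_mono) auto
    also have "\<dots> \<le> 2 ^ m" using m1 pm by linarith
    finally have "\<bar>real_of_int (to_lattice r w $ i)\<bar> \<le> real_of_int (2 ^ m)" by simp
    then show "\<bar>to_lattice r w $ i\<bar> \<le> 2^m" by linarith
  qed
  have "xi (to_lattice r w) \<le> N * 2 powr (real m * \<beta>)" using bound[OF box] .
  also have "2 powr (real m * \<beta>) = (2 powr real m) powr \<beta>" by (simp add: powr_powr)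
  also have "(2 powr real m) powr \<beta> \<le> (2 * (1 + r * \<rho>)) powr \<beta>"
    using m2 b by (intro powr_mono2) auto
  finally have "xi (to_lattice r w) \<le> N * (2 * (1 + r * \<rho>)) powr \<beta>"
    using N by (smt (verit) mult_left_mono)
  then show "xiT xi a r w \<le> N * (2 * (1 + r * \<rho>)) powr \<beta> / a"
    using a by (simp add: xiT_def divide_right_mono)
next
  fix B :: real
  have "filterlim (\<lambda>\<rho>. q * \<rho> / (N * (2 * (1 + r * \<rho>)) powr \<beta> / a)) at_top at_top"
    by (rule lim_test) (use q a N r b in auto)
  then have "eventually (\<lambda>\<rho>. B < q * \<rho> / (N * (2 * (1 + r * \<rho>)) powr \<beta> / a)) at_top"
    by (simp add: filterlim_at_top_dense)
  then show "\<exists>\<rho>0. \<forall>\<rho>\<ge>\<rho>0. B < q * \<rho> / (N * (2 * (1 + r * \<rho>)) powr \<beta> / a)"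
    by (simp add: eventually_at_top_linorder)
qed

theorem lemma3p1:
  fixes M :: "'w measure" and \<xi> :: "int^'d \<Rightarrow> 'w \<Rightarrow> real"
    and \<alpha> T :: real and z :: "real^'d"
  assumes "prob_space M"
    and "\<And>x. \<xi> x \<in> borel_measurable M"
    and "prob_space.indep_vars M (\<lambda>_. borel) \<xi> UNIV"
    and "\<And>x t. t \<ge> 1 \<Longrightarrow> measure M {\<omega>\<in>space M. \<xi> x \<omega> > t} = t powr (-\<alpha>)"
    and "\<alpha> > real CARD('d)"
    and "T > 1"
    and "z \<in> LT (rT (qexp \<alpha> TYPE('d)) T)"
  shows "AE \<omega> in M. \<exists>n y.
           admissible_path (rT (qexp \<alpha> TYPE('d)) T) z n y \<and>
           path_cost (qexp \<alpha> TYPE('d))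
             (xiT (\<lambda>x. \<xi> x \<omega>) (aT (qexp \<alpha> TYPE('d)) T) (rT (qexp \<alpha> TYPE('d)) T)) n y
           = hT \<alpha> T (\<lambda>x. \<xi> x \<omega>) z"
proof -
  interpret prob_space M by (rule assms(1))
  define D where "D = real CARD('d)"
  have D1: "1 \<le> D" unfolding D_def by (simp add: Suc_le_eq)
  have aD: "\<alpha> > D" using assms(5) unfolding D_def .
  define \<beta> where "\<beta> = (D / \<alpha> + 1) / 2"
  have Da: "D / \<alpha> < 1" using aD D1 by (simp add: field_simps)
  have b0: "0 < \<beta>" unfolding \<beta>_def using aD D1 by (simp add: field_simps)
  have b1: "\<beta> < 1" unfolding \<beta>_def using Da by simp
  have ab: "\<alpha> * \<beta> > real CARD('d)"
  proof -
    have "\<alpha> * \<beta> = (D + \<alpha>) / 2" unfolding \<beta>_def using aD D1 by (simp add: field_simps)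
    then show ?thesis using aD unfolding D_def by simp
  qed
  define q where "q = qexp \<alpha> TYPE('d)"
  have q: "q > 0" unfolding q_def qexp_def using aD D1 unfolding D_def by simp
  define r where "r = rT q T"
  define a where "a = aT q T"
  have lnT: "ln T > 0" using assms(6) by simp
  have TlT: "T / ln T > 0" using lnT assms(6) by simp
  have r: "r > 0" unfolding r_def rT_def using lnT assms(6) by simp
  have a: "a > 0" unfolding a_def aT_def using lnT assms(6) by simp
  have AE1: "AE \<omega> in M. \<forall>x. 0 < \<xi> x \<omega>"
  proof (subst AE_all_countable, intro allI)
    fix x
    have "prob {\<omega>\<in>space M. \<xi> x \<omega> > 1} = 1" using assms(4)[of 1 x] by simp
    then have "AE \<omega> in M. \<omega> \<in> {\<omega>\<in>space M. \<xi> x \<omega> > 1}" by (rule AE_prob_1)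
    then show "AE \<omega> in M. 0 < \<xi> x \<omega>" by eventually_elim auto
  qed
  have AE2: "AE \<omega> in M. \<exists>N>0. \<forall>m::nat. \<forall>x::int^'d. (\<forall>i. \<bar>x$i\<bar> \<le> 2^m) \<longrightarrow> \<xi> x \<omega> \<le> N * 2 powr (real m * \<beta>)"
    using aD D1 by (intro growth_AE[OF assms(1) assms(2) assms(4) _ b0 ab]) auto
  from AE1 AE2 show ?thesis
  proof eventually_elim
    case (elim \<omega>)
    then obtain N where N: "N > 0" "\<forall>m::nat. \<forall>x::int^'d. (\<forall>i. \<bar>x$i\<bar> \<le> 2^m) \<longrightarrow> \<xi> x \<omega> \<le> N * 2 powr (real m * \<beta>)"
      by blast
    have "\<exists>n y. admissible_path r z n y \<and>
     path_cost q (xiT (\<lambda>x. \<xi> x \<omega>) a r) n y = Inf {path_cost q (xiT (\<lambda>x. \<xi> x \<omega>) a r) n y | n y. admissible_path r z n y}"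
      using N elim(1) assms(7) by (intro connect[OF r q a _ b0 b1 _ N(1)]) (auto simp: r_def q_def)
    then show ?case unfolding hT_def Let_def q_def[symmetric] r_def[symmetric] a_def[symmetric] .
  qed
qed

end
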